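(* Let $g$ and $h$ be any two encoders (in the applications, $g=f_t$ is the current model and $h=f_{t-1}$ the previous one) and let $\mathcal{D}$ be any task distribution. Then $$L_{\mathrm{con}}(g;\mathcal{D}) \le \alpha\, L_{\mathrm{con}}(h;\mathcal{D}) + L_{\mathrm{dis}}(g;h,\mathcal{D}) + \beta,$$ $$L_{\mathrm{con}}(g;\mathcal{D}) \ge \alpha\, L_{\mathrm{con}}(h;\mathcal{D}) + L_{\mathrm{dis}}(g;h,\mathcal{D}) + \beta',$$ where $\alpha=\frac{2e^2}{1+e^2}$, $\beta = 2-\alpha+\alpha\log\frac{\alpha}{2}$ and $\beta'=-\alpha\log(1+e^2)-\alpha$.
   Context: Let $\mathcal X$ be a measurable input space and $d\ge 1$. An encoder is a measurable map $f:\mathcal X\to\mathbb R^d$ with $\|f(x)\|_2=1$ for all $x$. A task distribution $\mathcal D$ consists of a probability distribution $\mu$ on a countable set of classes together with, for each class $c$, a probability distribution $\mathcal D_c$ on $\mathcal X$. Sampling scheme: $c^+\sim\mu$ and $c^-\sim\mu$ independently; given $c^+$, $x,x^+$ are drawn i.i.d. from $\mathcal D_{c^+}$; given $c^-$, $x^-\sim\mathcal D_{c^-}$ independently. Let $\ell(v)=\log(1+e^{-v})$. The contrastive loss is $L_{\mathrm{con}}(f;\mathcal D)=\mathbb E\big[\ell\big(f(x)^\top(f(x^+)-f(x^-))\big)\big]$. For an encoder $f$ let $\mathbf p(f;x,x^+,x^-)=\mathrm{softmax}\big(f(x)^\top f(x^+),\,f(x)^\top f(x^-)\big)\in\mathbb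 R^2$. For encoders $g,h$ the distillation loss is $L_{\mathrm{dis}}(g;h,\mathcal D)=\mathbb E\big[-\mathbf p(h;x,x^+,x^-)\cdot\log\mathbf p(g;x,x^+,x^-)\big]$ (logarithm taken componentwise), with the same sampling scheme. *)

theory Defs
  imports "HOL-Probability.Probability"
begin

definition ell :: "real \<Rightarrow> real" where
  "ell v = ln (1 + exp (- v))"

definition encoder :: "'x measure \<Rightarrow> ('x \<Rightarrow> real ^ 'd) \<Rightarrow> bool" where
  "encoder Mx f \<longleftrightarrow> f \<in> borel_measurable Mx \<and> (\<forall>x\<in>space Mx. norm (f x) = 1)"

definition task_dist :: "'x measure \<Rightarrow> 'c pmf \<Rightarrow> ('c \<Rightarrow> 'x measure) \<Rightarrow> bool" where
  "task_dist Mx mu D \<longleftrightarrow> (\<forall>c. D c \<in> space (prob_algebra Mx))"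

text \<open>Expectation under the sampling scheme: c+, c- i.i.d. from mu; x, x+ i.i.d. from D c+;
  x- from D c-, independently.\<close>
definition task_expect :: "'c pmf \<Rightarrow> ('c \<Rightarrow> 'x measure) \<Rightarrow> ('x \<Rightarrow> 'x \<Rightarrow> 'x \<Rightarrow> real) \<Rightarrow> real" where
  "task_expect mu D F =
     measure_pmf.expectation (pair_pmf mu mu)
       (\<lambda>(cp, cn). integral\<^sup>L (D cp \<Otimes>\<^sub>M D cp \<Otimes>\<^sub>M D cn) (\<lambda>(x, xp, xn). F x xp xn))"

definition L_con :: "('x \<Rightarrow> real ^ 'd) \<Rightarrow> 'c pmf \<Rightarrow> ('c \<Rightarrow> 'x measure) \<Rightarrow> real" where
  "L_con f mu D = task_expect mu D (\<lambda>x xp xn. ell (f x \<bullet> (f xp - f xn)))"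

definition p1 :: "('x \<Rightarrow> real ^ 'd) \<Rightarrow> 'x \<Rightarrow> 'x \<Rightarrow> 'x \<Rightarrow> real" where
  "p1 f x xp xn = exp (f x \<bullet> f xp) / (exp (f x \<bullet> f xp) + exp (f x \<bullet> f xn))"

definition p2 :: "('x \<Rightarrow> real ^ 'd) \<Rightarrow> 'x \<Rightarrow> 'x \<Rightarrow> 'x \<Rightarrow> real" where
  "p2 f x xp xn = exp (f x \<bullet> f xn) / (exp (f x \<bullet> f xp) + exp (f x \<bullet> f xn))"

definition L_dis :: "('x \<Rightarrow> real ^ 'd) \<Rightarrow> ('x \<Rightarrow> real ^ 'd) \<Rightarrow> 'c pmf \<Rightarrow> ('c \<Rightarrow> 'x measure) \<Rightarrow> real" where
  "L_dis g h mu D = task_expect mu D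
     (\<lambda>x xp xn. - (p1 h x xp xn * ln (p1 g x xp xn) + p2 h x xp xn * ln (p2 g x xp xn)))"

end

theory Submission
  imports Defs
begin

lemma key:
  fixes a b \<alpha> \<beta> \<beta>' :: real
  assumes a: "\<bar>a\<bar> \<le> 2" and b: "\<bar>b\<bar> \<le> 2"
    and al: "\<alpha> = 2 * exp 1 ^ 2 / (1 + exp 1 ^ 2)"
    and be: "\<beta> = 2 - \<alpha> + \<alpha> * ln (\<alpha> / 2)"
    and be': "\<beta>' = - \<alpha> * ln (1 + exp 1 ^ 2) - \<alpha>"
  defines "q \<equiv> exp (-a) / (1 + exp (-a))"
  shows "- q * b \<le> \<alpha> * ln (1 + exp (-a)) + \<beta>"
    and "- q * b \<ge> \<alpha> * ln (1 + exp (-a)) + \<beta>'"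
proof -
  have dp: "0 < 1 + exp (-a)" by (simp add: add_pos_pos)
  have q0: "0 \<le> q" "q \<le> 1" unfolding q_def using dp by (auto simp: divide_le_eq)
  have e2: "exp 1 ^ 2 = exp (2::real)" by (simp add: exp_of_nat_mult[symmetric])
  define s0 where "s0 = 1 + exp (-2::real)"
  define s where "s = 1 + exp (-a)"
  have s0p: "s0 > 0" and sp: "s > 0" unfolding s0_def s_def by (auto intro: add_pos_pos)
  have als: "\<alpha> = 2 / s0" unfolding al e2 s0_def
    by (simp add: exp_minus field_simps)
  have qs: "q = 1 - 1 / s" unfolding q_def s_def using dp by (simp add: field_simps)
  have "- q * b \<le> 2 * q" using mult_left_mono[of "-b" 2 q] b q0 by (auto simp: abs_le_iff mult.commute)
  also have "\<dots> \<le> \<alpha> * ln s + \<beta>"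
  proof -
    have r: "ln (s0 / s) \<le> s0 / s - 1" using s0p sp by (intro ln_le_minus_one) auto
    have "ln (s0/s) = ln s0 - ln s" using s0p sp by (simp add: ln_div)
    with r have "1 - s0 / s \<le> ln s - ln s0" by simp
    hence "(2/s0) * (1 - s0/s) \<le> (2/s0) * (ln s - ln s0)" using s0p by (intro mult_left_mono) auto
    moreover have "(2/s0) * (1 - s0/s) = 2/s0 - 2/s" using s0p sp by (simp add: field_simps)
    moreover have "(2/s0) * (ln s - ln s0) = 2/s0 * ln s - 2/s0 * ln s0" by (simp add: right_diff_distrib)
    moreover have "ln (\<alpha>/2) = - ln s0" using s0p by (simp add: als ln_div)
    moreover have "2 * q = 2 - 2/s" unfolding qs by simp
    ultimately show ?thesis unfolding be als by simp
  qed
  finally show "- q * b \<le> \<alpha> * ln (1 + exp (-a)) + \<beta>" unfolding s_def .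
  have qle: "q \<le> exp 2 / (1 + exp 2)" unfolding q_def
  proof -
    have "exp (-a) \<le> exp 2" using a by simp
    thus "exp (-a) / (1 + exp (-a)) \<le> exp 2 / (1 + exp 2)"
      by (simp add: field_simps add_pos_pos)
  qed
  have lnle: "ln (1 + exp (-a)) \<le> ln (1 + exp 2)"
    using a by (subst ln_le_cancel_iff) (auto intro: add_pos_pos)
  have ap: "\<alpha> \<ge> 0" unfolding al by simp
  have "\<alpha> * ln (1 + exp (-a)) + \<beta>' \<le> - \<alpha>"
    unfolding be' e2 using mult_left_mono[OF lnle ap] by simp
  also have "- \<alpha> \<le> - 2 * q" using qle unfolding al e2 by simp
  also have "- 2 * q \<le> - q * b" using mult_left_mono[of b 2 q] b q0 by (auto simp: abs_le_iff mult.commute)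
  finally show "- q * b \<ge> \<alpha> * ln (1 + exp (-a)) + \<beta>'" .
qed

lemma ell_meas[measurable]: "ell \<in> borel_measurable borel"
  unfolding ell_def by measurable

lemma ell_bound: "\<bar>t\<bar> \<le> 2 \<Longrightarrow> \<bar>ell t\<bar> \<le> exp 2"
proof -
  assume t: "\<bar>t\<bar> \<le> 2"
  have "0 \<le> ell t" unfolding ell_def by simp
  moreover have "ell t \<le> exp (-t)" unfolding ell_def by (rule ln_add_one_self_le_self) simp
  moreover have "exp (-t) \<le> exp 2" using t by simp
  ultimately show ?thesis by linarith
qed

lemma point:
  fixes gx gp gn hx hp hn :: "real ^ 'd" and \<alpha> \<beta> \<beta>' :: real
  assumes n: "norm gx = 1" "norm gp = 1" "norm gn = 1" "norm hx = 1" "norm hp = 1" "norm hn = 1"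
    and al: "\<alpha> = 2 * exp 1 ^ 2 / (1 + exp 1 ^ 2)"
    and be: "\<beta> = 2 - \<alpha> + \<alpha> * ln (\<alpha> / 2)"
    and be': "\<beta>' = - \<alpha> * ln (1 + exp 1 ^ 2) - \<alpha>"
  defines "B \<equiv> ell (gx \<bullet> (gp - gn))" and "A \<equiv> ell (hx \<bullet> (hp - hn))"
    and "C \<equiv> - (exp (hx \<bullet> hp) / (exp (hx \<bullet> hp) + exp (hx \<bullet> hn)) *
                  ln (exp (gx \<bullet> gp) / (exp (gx \<bullet> gp) + exp (gx \<bullet> gn))) +
               exp (hx \<bullet> hn) / (exp (hx \<bullet> hp) + exp (hx \<bullet> hn)) *
                  ln (exp (gx \<bullet> gn) / (exp (gx \<bullet> gp) + exp (gx \<bullet> gn))))"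
  shows "B \<le> \<alpha> * A + C + \<beta>" "B \<ge> \<alpha> * A + C + \<beta>'"
    "\<bar>A\<bar> \<le> exp 2 + 2" "\<bar>B\<bar> \<le> exp 2 + 2" "\<bar>C\<bar> \<le> exp 2 + 2"
proof -
  define u where "u = gx \<bullet> gp"
  define v where "v = gx \<bullet> gn"
  define hu where "hu = hx \<bullet> hp"
  define hv where "hv = hx \<bullet> hn"
  have bnd: "\<bar>u\<bar> \<le> 1" "\<bar>v\<bar> \<le> 1" "\<bar>hu\<bar> \<le> 1" "\<bar>hv\<bar> \<le> 1"
    unfolding u_def v_def hu_def hv_def using Cauchy_Schwarz_ineq2 n by (metis mult_1)+
  define b where "b = u - v"
  define a where "a = hu - hv"
  have ab: "\<bar>a\<bar> \<le> 2" "\<bar>b\<bar> \<le> 2" using bnd unfolding a_def b_def by auto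
  have Bb: "B = ell b" unfolding B_def b_def u_def v_def by (simp add: inner_diff_right)
  have Aa: "A = ell a" unfolding A_def a_def hu_def hv_def by (simp add: inner_diff_right)
  define q where "q = exp (-a) / (1 + exp (-a))"
  have dp: "0 < 1 + exp (-a)" by (simp add: add_pos_pos)
  have q0: "0 \<le> q" "q \<le> 1" unfolding q_def using dp by (auto simp: divide_le_eq)
  have sumexp: "exp u + exp v = exp u * (1 + exp (- b))" unfolding b_def
    by (simp add: distrib_left exp_add[symmetric])
  have sumexph: "exp hu + exp hv = exp hu * (1 + exp (- a))" unfolding a_def
    by (simp add: distrib_left exp_add[symmetric])
  have pos: "0 < 1 + exp (- b)" by (simp add: add_pos_pos)
  have l1: "ln (exp u / (exp u + exp v)) = - ell b"
    unfolding sumexp ell_def using pos by (simp add: ln_div ln_mult)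
  have l2: "ln (exp v / (exp u + exp v)) = - b - ell b"
    unfolding sumexp ell_def using pos by (simp add: ln_div ln_mult b_def)
  have q1: "exp hv / (exp hu + exp hv) = q"
  proof -
    have e: "exp (-a) = exp hv / exp hu" by (simp add: a_def exp_diff)
    have "0 < exp hu + exp hv" by (simp add: add_pos_pos)
    then show ?thesis unfolding q_def e by (simp add: field_simps)
  qed
  have q2: "exp hu / (exp hu + exp hv) = 1 - q"
  proof -
    have "0 < exp hu + exp hv" by (simp add: add_pos_pos)
    then have "exp hu / (exp hu + exp hv) + exp hv / (exp hu + exp hv) = 1"
      by (simp add: add_divide_distrib[symmetric])
    with q1 show ?thesis by linarith
  qed
  have Cq: "C = ell b + q * b"
    unfolding C_def u_def[symmetric] v_def[symmetric] hu_def[symmetric] hv_def[symmetric] l1 l2 q1 q2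
    by (simp add: algebra_simps)
  have k1: "- q * b \<le> \<alpha> * ln (1 + exp (-a)) + \<beta>"
    and k2: "- q * b \<ge> \<alpha> * ln (1 + exp (-a)) + \<beta>'"
    using key[OF ab al be be'] unfolding q_def by auto
  show "B \<le> \<alpha> * A + C + \<beta>" using k1 unfolding Bb Aa Cq ell_def by simp
  show "B \<ge> \<alpha> * A + C + \<beta>'" using k2 unfolding Bb Aa Cq ell_def by simp
  show "\<bar>A\<bar> \<le> exp 2 + 2" using ell_bound[OF ab(1)] Aa by simp
  show "\<bar>B\<bar> \<le> exp 2 + 2" using ell_bound[OF ab(2)] Bb by simp
  have "\<bar>q * b\<bar> \<le> 1 * 2" unfolding abs_mult using q0 ab by (intro mult_mono) auto
  then show "\<bar>C\<bar> \<le> exp 2 + 2" using ell_bound[OF ab(2)] Cq by simp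
qed


lemma int_ineq:
  fixes M :: "'a measure" and F G H :: "'a \<Rightarrow> real"
  assumes P: "prob_space M"
    and m: "F \<in> borel_measurable M" "G \<in> borel_measurable M" "H \<in> borel_measurable M"
    and bF: "\<And>x. x \<in> space M \<Longrightarrow> \<bar>F x\<bar> \<le> K"
    and bG: "\<And>x. x \<in> space M \<Longrightarrow> \<bar>G x\<bar> \<le> K"
    and bH: "\<And>x. x \<in> space M \<Longrightarrow> \<bar>H x\<bar> \<le> K"
  shows "(\<And>x. x \<in> space M \<Longrightarrow> F x \<le> a * G x + H x + b) \<Longrightarrow>
           integral\<^sup>L M F \<le> a * integral\<^sup>L M G + integral\<^sup>L M H + b"
    and "(\<And>x. x \<in> space M \<Longrightarrow> F x \<ge> a * G x + H x + b) \<Longrightarrow>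
           integral\<^sup>L M F \<ge> a * integral\<^sup>L M G + integral\<^sup>L M H + b"
    and "\<bar>integral\<^sup>L M F\<bar> \<le> K"
proof -
  interpret prob_space M by (rule P)
  have iF: "integrable M F" by (rule integrable_const_bound[where B=K]) (use bF m in auto)
  have iG: "integrable M G" by (rule integrable_const_bound[where B=K]) (use bG m in auto)
  have iH: "integrable M H" by (rule integrable_const_bound[where B=K]) (use bH m in auto)
  have iR: "integrable M (\<lambda>x. a * G x + H x + b)" using iG iH by auto
  have eq: "integral\<^sup>L M (\<lambda>x. a * G x + H x + b) = a * integral\<^sup>L M G + integral\<^sup>L M H + b"
    using iG iH by (simp add: integral_add prob_space)
  show "(\<And>x. x \<in> space M \<Longrightarrow> F x \<le> a * G x + H x + b) \<Longrightarrow>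
           integral\<^sup>L M F \<le> a * integral\<^sup>L M G + integral\<^sup>L M H + b"
    using integral_mono[OF iF iR] eq by metis
  show "(\<And>x. x \<in> space M \<Longrightarrow> F x \<ge> a * G x + H x + b) \<Longrightarrow>
           integral\<^sup>L M F \<ge> a * integral\<^sup>L M G + integral\<^sup>L M H + b"
    using integral_mono[OF iR iF] eq by metis
  have "\<bar>integral\<^sup>L M F\<bar> \<le> integral\<^sup>L M (\<lambda>x. \<bar>F x\<bar>)" by (rule integral_abs_bound)
  also have "\<dots> \<le> integral\<^sup>L M (\<lambda>x. K)"
    using iF bF by (intro integral_mono) auto
  also have "\<dots> = K" by (simp add: prob_space)
  finally show "\<bar>integral\<^sup>L M F\<bar> \<le> K" .
qed

theorem lemma1:
  fixes Mx :: "'x measure" and mu :: "'c pmf" and D :: "'c \<Rightarrow> 'x measure"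
    and g h :: "'x \<Rightarrow> real ^ 'd"
    and \<alpha> \<beta> \<beta>' :: real
  assumes "task_dist Mx mu D"
    and "encoder Mx g" and "encoder Mx h"
    and "\<alpha> = 2 * exp 1 ^ 2 / (1 + exp 1 ^ 2)"
    and "\<beta> = 2 - \<alpha> + \<alpha> * ln (\<alpha> / 2)"
    and "\<beta>' = - \<alpha> * ln (1 + exp 1 ^ 2) - \<alpha>"
  shows "L_con g mu D \<le> \<alpha> * L_con h mu D + L_dis g h mu D + \<beta> \<and>
         L_con g mu D \<ge> \<alpha> * L_con h mu D + L_dis g h mu D + \<beta>'"
proof -
  note al = assms(4) and be = assms(5) and be' = assms(6)
  have Dc: "prob_space (D c)" "sets (D c) = sets Mx" for c
    using assms(1) unfolding task_dist_def space_prob_algebra by auto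
  have spD: "space (D c) = space Mx" for c using Dc(2) by (rule sets_eq_imp_space_eq)
  have gm: "g \<in> borel_measurable (D c)" and hm: "h \<in> borel_measurable (D c)" for c
    using assms(2,3) measurable_cong_sets[OF Dc(2)[of c] refl, of borel]
    unfolding encoder_def by auto
  have gn: "x \<in> space Mx \<Longrightarrow> norm (g x) = 1" and hn: "x \<in> space Mx \<Longrightarrow> norm (h x) = 1" for x
    using assms(2,3) unfolding encoder_def by auto
  define FB where "FB = (\<lambda>(x, xp, xn). ell (g x \<bullet> (g xp - g xn)))"
  define FA where "FA = (\<lambda>(x, xp, xn). ell (h x \<bullet> (h xp - h xn)))"
  define FC where "FC = (\<lambda>(x::'x, xp::'x, xn::'x). - (p1 h x xp xn * ln (p1 g x xp xn) + p2 h x xp xn * ln (p2 g x xp xn)))"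
  define K where "K = exp 2 + (2::real)"
  define P where "P = (\<lambda>(cp, cn). D cp \<Otimes>\<^sub>M D cp \<Otimes>\<^sub>M D cn)"
  have PP: "prob_space (P c)" for c
    unfolding P_def by (cases c) (auto intro!: prob_space_pair Dc)
  have spP: "space (P c) = space Mx \<times> space Mx \<times> space Mx" for c
    unfolding P_def by (cases c) (simp add: space_pair_measure spD)
  have mB: "FB \<in> borel_measurable (P c)" and mA: "FA \<in> borel_measurable (P c)"
    and mC: "FC \<in> borel_measurable (P c)" for c
  proof -
    have Pc: "P c = D (fst c) \<Otimes>\<^sub>M D (fst c) \<Otimes>\<^sub>M D (snd c)"
      unfolding P_def by (simp add: case_prod_beta)
    note [measurable] = gm[of "fst c"] gm[of "snd c"] hm[of "fst c"] hm[of "snd c"]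
    show "FB \<in> borel_measurable (P c)" unfolding FB_def Pc by measurable
    show "FA \<in> borel_measurable (P c)" unfolding FA_def Pc by measurable
    show "FC \<in> borel_measurable (P c)" unfolding FC_def Pc p1_def p2_def by measurable
  qed
  have pt: "FB y \<le> \<alpha> * FA y + FC y + \<beta>" "FB y \<ge> \<alpha> * FA y + FC y + \<beta>'"
    "\<bar>FA y\<bar> \<le> K" "\<bar>FB y\<bar> \<le> K" "\<bar>FC y\<bar> \<le> K"
    if "y \<in> space Mx \<times> space Mx \<times> space Mx" for y
  proof -
    obtain x xp xn where y: "y = (x, xp, xn)" by (cases y) auto
    have xs: "x \<in> space Mx" "xp \<in> space Mx" "xn \<in> space Mx" using that y by auto
    note q = point[OF gn[OF xs(1)] gn[OF xs(2)] gn[OF xs(3)] hn[OF xs(1)] hn[OF xs(2)] hn[OF xs(3)] al be be']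
    show "FB y \<le> \<alpha> * FA y + FC y + \<beta>" "FB y \<ge> \<alpha> * FA y + FC y + \<beta>'"
      "\<bar>FA y\<bar> \<le> K" "\<bar>FB y\<bar> \<le> K" "\<bar>FC y\<bar> \<le> K"
      using q unfolding y FA_def FB_def FC_def K_def p1_def p2_def by auto
  qed
  define IB where "IB = (\<lambda>c. integral\<^sup>L (P c) FB)"
  define IA where "IA = (\<lambda>c. integral\<^sup>L (P c) FA)"
  define IC where "IC = (\<lambda>c. integral\<^sup>L (P c) FC)"
  note ii = int_ineq[OF PP mB mA mC, of _ K]
  have inn: "IB c \<le> \<alpha> * IA c + IC c + \<beta>" "IB c \<ge> \<alpha> * IA c + IC c + \<beta>'"
    "\<bar>IA c\<bar> \<le> K" "\<bar>IB c\<bar> \<le> K" "\<bar>IC c\<bar> \<le> K" for c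
  proof -
    have bB: "\<And>y. y \<in> space (P c) \<Longrightarrow> \<bar>FB y\<bar> \<le> K"
      and bA: "\<And>y. y \<in> space (P c) \<Longrightarrow> \<bar>FA y\<bar> \<le> K"
      and bC: "\<And>y. y \<in> space (P c) \<Longrightarrow> \<bar>FC y\<bar> \<le> K" using pt unfolding spP by auto
    show "IB c \<le> \<alpha> * IA c + IC c + \<beta>" "IB c \<ge> \<alpha> * IA c + IC c + \<beta>'"
      unfolding IA_def IB_def IC_def
      by (rule int_ineq[OF PP mB mA mC bB bA bC]; use pt spP in auto)+
    show "\<bar>IB c\<bar> \<le> K" unfolding IB_def by (rule int_ineq(3)[OF PP mB mA mC bB bA bC])
    show "\<bar>IA c\<bar> \<le> K" unfolding IA_def by (rule int_ineq(3)[OF PP mA mB mC bA bB bC])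
    show "\<bar>IC c\<bar> \<le> K" unfolding IC_def by (rule int_ineq(3)[OF PP mC mB mA bC bB bA])
  qed
  have eqs: "L_con g mu D = measure_pmf.expectation (pair_pmf mu mu) IB"
    "L_con h mu D = measure_pmf.expectation (pair_pmf mu mu) IA"
    "L_dis g h mu D = measure_pmf.expectation (pair_pmf mu mu) IC"
    unfolding L_con_def L_dis_def task_expect_def IA_def IB_def IC_def P_def FA_def FB_def FC_def
    by (simp_all add: case_prod_beta')
  have PM: "prob_space (measure_pmf (pair_pmf mu mu))" by (rule measure_pmf.prob_space_axioms)
  note oo = int_ineq[OF PM _ _ _ inn(4) inn(3) inn(5)]
  show ?thesis unfolding eqs
    using oo(1)[where a=\<alpha> and b=\<beta>] oo(2)[where a=\<alpha> and b=\<beta>'] inn by simp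
qed

end
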